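(* Let $(\mathcal{X},d)$ be a finite metric space, $P$ a probability distribution on $\mathcal{X}$, $A\subseteq\mathcal{X}$ a nonempty set of allowable points, and $k\ge1$ an integer. Let $O$ be an optimal $k$-RRP solution, i.e., a $k$-multiset of points of $A$ minimizing $\mathbb{E}_{X\sim P_k}[d_k(O,X)]$ among all $k$-multisets of points of $A$. Let $S\sim P_k$ be a random $k$-multiset and, for each $S$, let $T(S)$ be a $k$-multiset of points of $A$ minimizing $d_k(S,T(S))$ (algorithm RRP returns $T(S)$). Then $$\mathbb{E}_{S\sim P_k}\mathbb{E}_{X\sim P_k}[d_k(T(S),X)]\le 3\cdot \mathbb{E}_{X\sim P_k}[d_k(O,X)].$$
   Context: For multisets $U,V$ of exactly $k$ points of $\mathcal{X}$, $d_k(U,V)$ is the minimum, over perfect matchings between the $k$ elements of $U$ and the $k$ elements of $V$ (with multiplicity), of the sum of the distances of matched pairs. $P_k$ is the distribution of the multiset of $k$ points of $\mathcal{X}$ drawn i.i.d. from $P$. *)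

theory Defs
  imports "HOL-Probability.Probability" "HOL-Library.Multiset"
begin

definition finite_metric_space :: "'a set \<Rightarrow> ('a \<Rightarrow> 'a \<Rightarrow> real) \<Rightarrow> bool" where
  "finite_metric_space X d \<longleftrightarrow> finite X \<and>
     (\<forall>x\<in>X. \<forall>y\<in>X. d x y = 0 \<longleftrightarrow> x = y) \<and>
     (\<forall>x\<in>X. \<forall>y\<in>X. d x y = d y x) \<and>
     (\<forall>x\<in>X. \<forall>y\<in>X. \<forall>z\<in>X. d x z \<le> d x y + d y z)"

definition matching_cost :: "('a \<Rightarrow> 'a \<Rightarrow> real) \<Rightarrow> 'a multiset \<Rightarrow> 'a multiset \<Rightarrow> real" where
  "matching_cost d U V = Min {(\<Sum>p\<in>#M. d (fst p) (snd p)) | M.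
       image_mset fst M = U \<and> image_mset snd M = V}"

fun multiset_pmf :: "'a pmf \<Rightarrow> nat \<Rightarrow> 'a multiset pmf" where
  "multiset_pmf P 0 = return_pmf {#}"
| "multiset_pmf P (Suc k) =
     bind_pmf P (\<lambda>x. bind_pmf (multiset_pmf P k) (\<lambda>M. return_pmf (add_mset x M)))"

end

theory Submission imports Defs begin

definition mcands :: "'a multiset \<Rightarrow> 'a multiset \<Rightarrow> ('a \<times> 'a) multiset set" where
  "mcands U V = {M. image_mset fst M = U \<and> image_mset snd M = V}"

lemma mc_eq: "matching_cost d U V = Min ((\<lambda>M. \<Sum>p\<in>#M. d (fst p) (snd p)) ` mcands U V)"
  unfolding matching_cost_def mcands_def by (simp add: setcompr_eq_image)

lemma mcands_finite: "finite (mcands U V)"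
proof (rule finite_subset[OF _ finite_multisets_of_size[of "set_mset U \<times> set_mset V" "size U"]])
  show "mcands U V \<subseteq> multisets_of_size (set_mset U \<times> set_mset V) (size U)"
    unfolding mcands_def multisets_of_size_def by force
qed auto

lemma mcands_ne:
  assumes "size U = size V" shows "mcands U V \<noteq> {}"
proof -
  obtain xs ys where xs: "mset xs = U" and ys: "mset ys = V" by (metis ex_mset)
  have len: "length xs = length ys" using assms xs ys by auto
  have "mset (zip xs ys) \<in> mcands U V"
    unfolding mcands_def using len xs ys
    by (simp flip: mset_map add: map_fst_zip map_snd_zip)
  then show ?thesis by auto
qed

lemma mc_le:
  assumes "M \<in> mcands U V"
  shows "matching_cost d U V \<le> (\<Sum>p\<in>#M. d (fst p) (snd p))"
  unfolding mc_eq using assms mcands_finite by (intro Min_le) auto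

lemma mc_attained:
  assumes "size U = size V"
  obtains M where "M \<in> mcands U V" "matching_cost d U V = (\<Sum>p\<in>#M. d (fst p) (snd p))"
proof -
  have "matching_cost d U V \<in> (\<lambda>M. \<Sum>p\<in>#M. d (fst p) (snd p)) ` mcands U V"
    unfolding mc_eq using mcands_finite mcands_ne[OF assms] by (intro Min_in) auto
  then show ?thesis using that by blast
qed

lemma mc_sym:
  assumes "size U = size V" and sym: "\<And>x y. x \<in># U \<Longrightarrow> y \<in># V \<Longrightarrow> d x y = d y x"
  shows "matching_cost d V U \<le> matching_cost d U V"
proof -
  obtain M where M: "M \<in> mcands U V" "matching_cost d U V = (\<Sum>p\<in>#M. d (fst p) (snd p))"
    using mc_attained[OF assms(1)] by blast
  have sub: "\<And>p. p \<in># M \<Longrightarrow> fst p \<in># U \<and> snd p \<in># V"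
  proof -
    fix p assume "p \<in># M"
    then show "fst p \<in># U \<and> snd p \<in># V" using M(1) unfolding mcands_def by force
  qed
  have "image_mset prod.swap M \<in> mcands V U"
    using M(1) unfolding mcands_def by (simp add: multiset.map_comp comp_def)
  then have "matching_cost d V U \<le> (\<Sum>p\<in>#image_mset prod.swap M. d (fst p) (snd p))"
    by (rule mc_le)
  also have "\<dots> = (\<Sum>p\<in>#M. d (snd p) (fst p))" by (simp add: multiset.map_comp comp_def)
  also have "\<dots> = (\<Sum>p\<in>#M. d (fst p) (snd p))"
  proof (intro arg_cong[where f=sum_mset] image_mset_cong)
    fix p assume "p \<in># M"
    then show "d (snd p) (fst p) = d (fst p) (snd p)" using sub sym[of "fst p" "snd p"] by simp
  qed
  finally show ?thesis using M(2) by simp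
qed

lemma glue:
  fixes d :: "'a \<Rightarrow> 'a \<Rightarrow> real"
  assumes "image_mset snd M1 = image_mset fst M2"
    and tri: "\<And>x y z. x \<in> X \<Longrightarrow> y \<in> X \<Longrightarrow> z \<in> X \<Longrightarrow> d x z \<le> d x y + d y z"
    and "\<forall>p\<in>#M1. fst p \<in> X \<and> snd p \<in> X" and "\<forall>p\<in>#M2. fst p \<in> X \<and> snd p \<in> X"
  shows "\<exists>M3. image_mset fst M3 = image_mset fst M1 \<and> image_mset snd M3 = image_mset snd M2 \<and>
     (\<Sum>p\<in>#M3. d (fst p) (snd p)) \<le> (\<Sum>p\<in>#M1. d (fst p) (snd p)) + (\<Sum>p\<in>#M2. d (fst p) (snd p))"
  using assms(1,3,4)
proof (induction "size M1" arbitrary: M1 M2)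
  case 0
  then have "size M2 = 0" by (metis size_image_mset)
  then have "M2 = {#}" by simp
  with 0 show ?case by auto
next
  case (Suc n)
  have "M1 \<noteq> {#}" using Suc.hyps(2) by auto
  then obtain p1 where p1: "p1 \<in># M1" by blast
  then have "snd p1 \<in># image_mset snd M1" by simp
  then have "snd p1 \<in># image_mset fst M2" using Suc.prems(1) by simp
  then obtain p2 where p2: "p2 \<in># M2" "fst p2 = snd p1" by auto
  define N1 where "N1 = M1 - {#p1#}"
  define N2 where "N2 = M2 - {#p2#}"
  have M1: "M1 = add_mset p1 N1" using p1 N1_def by simp
  have M2: "M2 = add_mset p2 N2" using p2 N2_def by simp
  have "image_mset snd N1 = image_mset fst N2" using Suc.prems(1) p2(2) unfolding M1 M2 by simp
  moreover have "n = size N1" using Suc.hyps(2) M1 by simp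
  moreover have "\<forall>p\<in>#N1. fst p \<in> X \<and> snd p \<in> X" "\<forall>p\<in>#N2. fst p \<in> X \<and> snd p \<in> X"
    using Suc.prems(2,3) M1 M2 by auto
  ultimately obtain N3 where N3: "image_mset fst N3 = image_mset fst N1" "image_mset snd N3 = image_mset snd N2"
     "(\<Sum>p\<in>#N3. d (fst p) (snd p)) \<le> (\<Sum>p\<in>#N1. d (fst p) (snd p)) + (\<Sum>p\<in>#N2. d (fst p) (snd p))"
    using Suc.hyps(1) by blast
  have tri1: "d (fst p1) (snd p2) \<le> d (fst p1) (snd p1) + d (fst p2) (snd p2)"
    using tri[of "fst p1" "snd p1" "snd p2"] Suc.prems(2,3) p1 p2 by auto
  show ?case
  proof (intro exI[of _ "add_mset (fst p1, snd p2) N3"] conjI)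
    show "image_mset fst (add_mset (fst p1, snd p2) N3) = image_mset fst M1" using N3(1) M1 by simp
    show "image_mset snd (add_mset (fst p1, snd p2) N3) = image_mset snd M2" using N3(2) M2 by simp
    have "(\<Sum>p\<in>#add_mset (fst p1, snd p2) N3. d (fst p) (snd p)) = d (fst p1) (snd p2) + (\<Sum>p\<in>#N3. d (fst p) (snd p))" by simp
    moreover have "(\<Sum>p\<in>#M1. d (fst p) (snd p)) = d (fst p1) (snd p1) + (\<Sum>p\<in>#N1. d (fst p) (snd p))"
      by (subst M1) simp
    moreover have "(\<Sum>p\<in>#M2. d (fst p) (snd p)) = d (fst p2) (snd p2) + (\<Sum>p\<in>#N2. d (fst p) (snd p))"
      by (subst M2) simp
    ultimately show "(\<Sum>p\<in>#add_mset (fst p1, snd p2) N3. d (fst p) (snd p)) \<le> (\<Sum>p\<in>#M1. d (fst p) (snd p)) + (\<Sum>p\<in>#M2. d (fst p) (snd p))"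
      using N3(3) tri1 by linarith
  qed
qed

lemma mc_tri:
  assumes "size U = size V" "size V = size W"
    and tri: "\<And>x y z. x \<in> X \<Longrightarrow> y \<in> X \<Longrightarrow> z \<in> X \<Longrightarrow> d x z \<le> d x y + d y z"
    and "set_mset U \<subseteq> X" "set_mset V \<subseteq> X" "set_mset W \<subseteq> X"
  shows "matching_cost d U W \<le> matching_cost d U V + matching_cost d V W"
proof -
  obtain M1 where M1: "M1 \<in> mcands U V" "matching_cost d U V = (\<Sum>p\<in>#M1. d (fst p) (snd p))"
    using mc_attained[OF assms(1)] by blast
  obtain M2 where M2: "M2 \<in> mcands V W" "matching_cost d V W = (\<Sum>p\<in>#M2. d (fst p) (snd p))"
    using mc_attained[OF assms(2)] by blast
  have s1: "\<forall>p\<in>#M1. fst p \<in> X \<and> snd p \<in> X"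
  proof
    fix p assume "p \<in># M1"
    then show "fst p \<in> X \<and> snd p \<in> X" using M1(1) assms(4,5) unfolding mcands_def by force
  qed
  have s2: "\<forall>p\<in>#M2. fst p \<in> X \<and> snd p \<in> X"
  proof
    fix p assume "p \<in># M2"
    then show "fst p \<in> X \<and> snd p \<in> X" using M2(1) assms(5,6) unfolding mcands_def by force
  qed
  have "image_mset snd M1 = image_mset fst M2" using M1(1) M2(1) unfolding mcands_def by simp
  from glue[where X=X and d=d, OF this tri s1 s2] obtain M3 where M3: "image_mset fst M3 = image_mset fst M1"
    "image_mset snd M3 = image_mset snd M2"
    "(\<Sum>p\<in>#M3. d (fst p) (snd p)) \<le> (\<Sum>p\<in>#M1. d (fst p) (snd p)) + (\<Sum>p\<in>#M2. d (fst p) (snd p))"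
    by blast
  have "M3 \<in> mcands U W" using M3 M1(1) M2(1) unfolding mcands_def by simp
  then have "matching_cost d U W \<le> (\<Sum>p\<in>#M3. d (fst p) (snd p))" by (rule mc_le)
  then show ?thesis using M3(3) M1(2) M2(2) by simp
qed

lemma mpmf_support: "S \<in> set_pmf (multiset_pmf P k) \<Longrightarrow> size S = k \<and> set_mset S \<subseteq> set_pmf P"
  by (induction k arbitrary: S) fastforce+

lemma mpmf_finite: "finite (set_pmf P) \<Longrightarrow> finite (set_pmf (multiset_pmf P k))"
  by (induction k) auto


theorem theorem6:
  fixes X A :: "'a set" and d :: "'a \<Rightarrow> 'a \<Rightarrow> real" and P :: "'a pmf" and k :: nat
    and Opt :: "'a multiset" and T :: "'a multiset \<Rightarrow> 'a multiset"
  assumes metric: "finite_metric_space X d"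
    and P_X: "set_pmf P \<subseteq> X"
    and A_sub: "A \<subseteq> X" and A_ne: "A \<noteq> {}"
    and k: "k \<ge> 1"
    and O_adm: "set_mset Opt \<subseteq> A" "size Opt = k"
    and O_opt: "\<And>Opt'. set_mset Opt' \<subseteq> A \<Longrightarrow> size Opt' = k \<Longrightarrow>
        measure_pmf.expectation (multiset_pmf P k) (\<lambda>Y. matching_cost d Opt Y)
          \<le> measure_pmf.expectation (multiset_pmf P k) (\<lambda>Y. matching_cost d Opt' Y)"
    and T_adm: "\<And>S. S \<in> set_pmf (multiset_pmf P k) \<Longrightarrow> set_mset (T S) \<subseteq> A \<and> size (T S) = k"
    and T_opt: "\<And>S T'. S \<in> set_pmf (multiset_pmf P k) \<Longrightarrow> set_mset T' \<subseteq> A \<Longrightarrow> size T' = k \<Longrightarrow>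
        matching_cost d S (T S) \<le> matching_cost d S T'"
  shows "measure_pmf.expectation (multiset_pmf P k)
           (\<lambda>S. measure_pmf.expectation (multiset_pmf P k) (\<lambda>Y. matching_cost d (T S) Y))
         \<le> 3 * measure_pmf.expectation (multiset_pmf P k) (\<lambda>Y. matching_cost d Opt Y)"
  proof -
  let ?Q = "multiset_pmf P k"
  let ?c = "matching_cost d"
  have fX: "finite X" and sym: "\<And>x y. x \<in> X \<Longrightarrow> y \<in> X \<Longrightarrow> d x y = d y x"
    and tri: "\<And>x y z. x \<in> X \<Longrightarrow> y \<in> X \<Longrightarrow> z \<in> X \<Longrightarrow> d x z \<le> d x y + d y z"
    using metric unfolding finite_metric_space_def by blast+
  have finQ: "finite (set_pmf ?Q)" using mpmf_finite finite_subset[OF P_X fX] by blast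
  have supp: "\<And>S. S \<in> set_pmf ?Q \<Longrightarrow> size S = k \<and> set_mset S \<subseteq> X"
    using mpmf_support P_X by blast
  have OX: "set_mset Opt \<subseteq> X" using O_adm A_sub by blast
  have key: "?c (T S) Y \<le> 2 * ?c Opt S + ?c Opt Y" if S: "S \<in> set_pmf ?Q" and Y: "Y \<in> set_pmf ?Q" for S Y
  proof -
    have TS: "size (T S) = k" "set_mset (T S) \<subseteq> X" using T_adm[OF S] A_sub by auto
    note sS = supp[OF S] and sY = supp[OF Y]
    have h1: "?c (T S) Y \<le> ?c (T S) S + ?c S Y"
      by (rule mc_tri[of "T S" S Y X d]) (use TS sS sY tri in auto)
    have h2: "?c (T S) S \<le> ?c S (T S)"
      by (rule mc_sym) (use TS sS sym in \<open>auto simp: subset_iff\<close>)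
    have h3: "?c S (T S) \<le> ?c S Opt" using T_opt[OF S O_adm] .
    have h4: "?c S Opt \<le> ?c Opt S"
      by (rule mc_sym) (use O_adm sS sym OX in \<open>auto simp: subset_iff\<close>)
    have h5: "?c S Y \<le> ?c S Opt + ?c Opt Y"
      by (rule mc_tri[of S Opt Y X d]) (use O_adm OX sS sY tri in auto)
    show ?thesis using h1 h2 h3 h4 h5 by linarith
  qed
  have int: "\<And>f::'a multiset \<Rightarrow> real. integrable ?Q f" using integrable_measure_pmf_finite[OF finQ] .
  have cst: "\<And>c::real. measure_pmf.expectation ?Q (\<lambda>_. c) = c"
    by (simp add: measure_pmf.prob_space)
  have "measure_pmf.expectation ?Q (\<lambda>S. measure_pmf.expectation ?Q (\<lambda>Y. ?c (T S) Y))
      \<le> measure_pmf.expectation ?Q (\<lambda>S. measure_pmf.expectation ?Q (\<lambda>Y. 2 * ?c Opt S + ?c Opt Y))"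
    apply (rule integral_mono_AE[OF int int])
    apply (rule AE_pmfI)
    apply (rule integral_mono_AE[OF int int])
    apply (rule AE_pmfI)
    using key by blast
  also have "\<dots> = measure_pmf.expectation ?Q (\<lambda>S. 2 * ?c Opt S + measure_pmf.expectation ?Q (\<lambda>Y. ?c Opt Y))"
  proof (rule Bochner_Integration.integral_cong[OF refl])
    fix S
    have "measure_pmf.expectation ?Q (\<lambda>Y. 2 * ?c Opt S + ?c Opt Y)
       = measure_pmf.expectation ?Q (\<lambda>Y. 2 * ?c Opt S) + measure_pmf.expectation ?Q (\<lambda>Y. ?c Opt Y)"
      by (rule Bochner_Integration.integral_add[OF int int])
    then show "measure_pmf.expectation ?Q (\<lambda>Y. 2 * ?c Opt S + ?c Opt Y) = 2 * ?c Opt S + measure_pmf.expectation ?Q (\<lambda>Y. ?c Opt Y)"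
      by (simp only: cst)
  qed
  also have "\<dots> = 3 * measure_pmf.expectation ?Q (\<lambda>Y. ?c Opt Y)"
  proof -
    have e1: "measure_pmf.expectation ?Q (\<lambda>S. 2 * ?c Opt S + measure_pmf.expectation ?Q (\<lambda>Y. ?c Opt Y))
       = measure_pmf.expectation ?Q (\<lambda>S. 2 * ?c Opt S) + measure_pmf.expectation ?Q (\<lambda>S. measure_pmf.expectation ?Q (\<lambda>Y. ?c Opt Y))"
      by (rule Bochner_Integration.integral_add[OF int int])
    have e2: "measure_pmf.expectation ?Q (\<lambda>S. 2 * ?c Opt S) = 2 * measure_pmf.expectation ?Q (\<lambda>Y. ?c Opt Y)"
      by (rule integral_mult_right_zero)
    have e3: "measure_pmf.expectation ?Q (\<lambda>S. measure_pmf.expectation ?Q (\<lambda>Y. ?c Opt Y)) = measure_pmf.expectation ?Q (\<lambda>Y. ?c Opt Y)"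
      by (rule cst)
    show ?thesis unfolding e1 e2 e3 by simp
  qed
  finally show ?thesis .
qed

end
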